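(* Let $q:\chi\to[0,\infty)$ be a risk metric that is normalized and additive. A risk-sharing rule $\boldsymbol{C}$ on $\chi^n$ is the $q$-proportional RS rule if and only if it has strongly aggregate contribution-over-$q$ ratios.
   Context: Fix a probability space $(\Omega,\mathcal{F},\mathbb{P})$ and an integer $n\ge 1$. Let $\chi$ be a convex cone of non-negative random variables on this space (closed under addition and under multiplication by positive scalars) with $0\in\chi$. All equalities between random variables are understood almost surely. A pool is a vector $\boldsymbol{X}=(X_1,\ldots,X_n)\in\chi^n$, with aggregate loss $S_{\boldsymbol{X}}=\sum_{i=1}^n X_i$. A risk-sharing (RS) rule is a mapping $\boldsymbol{C}$ assigning to every pool $\boldsymbol{X}\in\chi^n$ a vector $\boldsymbol{C}[\boldsymbol{X}]=(C_1[\boldsymbol{X}],\ldots,C_n[\boldsymbol{X}])$ of real-valued random variables satisfying $\sum_{i=1}^n C_i[\boldsymbol{X}]=S_{\boldsymbol{X}}$. A risk metric $q:\chi\to[0,\infty)$ is normalized if $q[0]=0$ and additive if $q\left[\sum_{k=1}^n X_k\right]=\sum_{k=1}^n q[X_k]$ for every $\boldsymbol{X}\in\chi^n$. The $q$-proportional RS rule is specified only on pools with $q[X_j]>0$ for at least one $j$, where it is given by $C_i[\boldsymbol{X}]=\frac{q[X_i]}{\sum_{k=1}^n q[X_k]}S_{\boldsymbol{X}}$ for $i=1,\ldots,n$; a rule "is the $q$-proportional RS rule" if its contributions equal these on every such pool. The rule $\boldsymbol{C}$ has strongly aggregate contribution-over-$q$ ratios if there exists a function $\mathbf{h}=(h_1,\ldots,h_n):\mathbb{R}^2\to\mathbb{R}^n$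 (the same for all pools) such that for every pool $\boldsymbol{X}$ with $q[X_j]>0$ for at least one $j$, $C_i[\boldsymbol{X}]=q[X_i]\,h_i\big(S_{\boldsymbol{X}},q[S_{\boldsymbol{X}}]\big)$ for all $i=1,\ldots,n$. *)

theory Defs
  imports "HOL-Probability.Probability"
begin

(* Random variables are real functions on the sample space of the probability space M.
   Pools are indexed by a finite type 'n (so n = CARD('n) >= 1 is arbitrary). *)

definition risk_cone :: "'a measure \<Rightarrow> ('a \<Rightarrow> real) set \<Rightarrow> bool" where
  "risk_cone M chi \<longleftrightarrow>
     (\<forall>X\<in>chi. X \<in> borel_measurable M \<and> (AE \<omega> in M. X \<omega> \<ge> 0)) \<and>
     (\<forall>X\<in>chi. \<forall>Y\<in>chi. (\<lambda>\<omega>. X \<omega> + Y \<omega>) \<in> chi) \<and>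
     (\<forall>X\<in>chi. \<forall>c::real. c > 0 \<longrightarrow> (\<lambda>\<omega>. c * X \<omega>) \<in> chi) \<and>
     (\<lambda>\<omega>. 0) \<in> chi"

definition pool :: "('a \<Rightarrow> real) set \<Rightarrow> ('n \<Rightarrow> 'a \<Rightarrow> real) \<Rightarrow> bool" where
  "pool chi X \<longleftrightarrow> (\<forall>i. X i \<in> chi)"

definition agg :: "('n::finite \<Rightarrow> 'a \<Rightarrow> real) \<Rightarrow> 'a \<Rightarrow> real" where
  "agg X = (\<lambda>\<omega>. \<Sum>i\<in>UNIV. X i \<omega>)"

definition rs_rule :: "'a measure \<Rightarrow> ('a \<Rightarrow> real) set
    \<Rightarrow> (('n::finite \<Rightarrow> 'a \<Rightarrow> real) \<Rightarrow> 'n \<Rightarrow> 'a \<Rightarrow> real) \<Rightarrow> bool" where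
  "rs_rule M chi C \<longleftrightarrow>
     (\<forall>X. pool chi X \<longrightarrow>
        (\<forall>i. C X i \<in> borel_measurable M) \<and>
        (AE \<omega> in M. (\<Sum>i\<in>UNIV. C X i \<omega>) = agg X \<omega>))"

definition risk_metric :: "('a \<Rightarrow> real) set \<Rightarrow> (('a \<Rightarrow> real) \<Rightarrow> real) \<Rightarrow> bool" where
  "risk_metric chi q \<longleftrightarrow> (\<forall>X\<in>chi. q X \<ge> 0)"

definition normalized :: "(('a \<Rightarrow> real) \<Rightarrow> real) \<Rightarrow> bool" where
  "normalized q \<longleftrightarrow> q (\<lambda>\<omega>. 0) = 0"

definition additive :: "('a \<Rightarrow> real) set \<Rightarrow> (('a \<Rightarrow> real) \<Rightarrow> real) \<Rightarrow> 'n::finite itself \<Rightarrow> bool" where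
  "additive chi q _ \<longleftrightarrow>
     (\<forall>X::'n \<Rightarrow> 'a \<Rightarrow> real. pool chi X \<longrightarrow> q (agg X) = (\<Sum>k\<in>UNIV. q (X k)))"

definition is_q_proportional :: "'a measure \<Rightarrow> ('a \<Rightarrow> real) set \<Rightarrow> (('a \<Rightarrow> real) \<Rightarrow> real)
    \<Rightarrow> (('n::finite \<Rightarrow> 'a \<Rightarrow> real) \<Rightarrow> 'n \<Rightarrow> 'a \<Rightarrow> real) \<Rightarrow> bool" where
  "is_q_proportional M chi q C \<longleftrightarrow>
     (\<forall>X. pool chi X \<and> (\<exists>j. q (X j) > 0) \<longrightarrow>
        (\<forall>i. AE \<omega> in M. C X i \<omega> = q (X i) / (\<Sum>k\<in>UNIV. q (X k)) * agg X \<omega>))"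

definition strongly_aggregate_ratios :: "'a measure \<Rightarrow> ('a \<Rightarrow> real) set \<Rightarrow> (('a \<Rightarrow> real) \<Rightarrow> real)
    \<Rightarrow> (('n::finite \<Rightarrow> 'a \<Rightarrow> real) \<Rightarrow> 'n \<Rightarrow> 'a \<Rightarrow> real) \<Rightarrow> bool" where
  "strongly_aggregate_ratios M chi q C \<longleftrightarrow>
     (\<exists>h :: real \<Rightarrow> real \<Rightarrow> 'n \<Rightarrow> real.
        \<forall>X. pool chi X \<and> (\<exists>j. q (X j) > 0) \<longrightarrow>
          (\<forall>i. AE \<omega> in M. C X i \<omega> = q (X i) * h (agg X \<omega>) (q (agg X)) i))"

end

theory Submission
  imports Defs
begin

lemma sum_in_chi:
  assumes "risk_cone M chi" "finite A" "\<forall>i. X i \<in> chi"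
  shows "(\<lambda>\<omega>. \<Sum>i\<in>A. X i \<omega>) \<in> chi"
  using assms(2)
proof (induction A rule: finite_induct)
  case empty
  then show ?case using assms(1) by (simp add: risk_cone_def)
next
  case (insert x F)
  have "(\<lambda>\<omega>. X x \<omega> + (\<Sum>i\<in>F. X i \<omega>)) \<in> chi"
  proof -
    have ad: "\<And>U V. U\<in>chi \<Longrightarrow> V \<in> chi \<Longrightarrow> (\<lambda>\<omega>. U \<omega> + V \<omega>) \<in> chi"
      using assms(1) unfolding risk_cone_def by blast
    have xin: "X x \<in> chi" using assms(3) by blast
    show ?thesis using ad[OF xin insert.IH] by simp
  qed
  then show ?case using insert.hyps by simp
qed

theorem theorem4:
  fixes M :: "'a measure" and chi :: "('a \<Rightarrow> real) set"
    and q :: "('a \<Rightarrow> real) \<Rightarrow> real"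
    and C :: "('n::finite \<Rightarrow> 'a \<Rightarrow> real) \<Rightarrow> 'n \<Rightarrow> 'a \<Rightarrow> real"
  assumes "prob_space M"
    and "risk_cone M chi"
    and "risk_metric chi q"
    and "normalized q"
    and "additive chi q TYPE('n)"
    and "rs_rule M chi C"
  shows "is_q_proportional M chi q C \<longleftrightarrow> strongly_aggregate_ratios M chi q C"
proof
  assume P: "is_q_proportional M chi q C"
  show "strongly_aggregate_ratios M chi q C"
    unfolding strongly_aggregate_ratios_def
  proof (intro exI[of _ "\<lambda>s t i. s / t"] allI impI)
    fix X :: "'n \<Rightarrow> 'a \<Rightarrow> real" and i
    assume H: "pool chi X \<and> (\<exists>j. q (X j) > 0)"
    have "q (agg X) = (\<Sum>k\<in>UNIV. q (X k))"
      using assms(5) H unfolding additive_def by blast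
    then show "AE \<omega> in M. C X i \<omega> = q (X i) * (agg X \<omega> / q (agg X))"
      using P H unfolding is_q_proportional_def by simp
  qed
next
  assume "strongly_aggregate_ratios M chi q C"
  then obtain h :: "real \<Rightarrow> real \<Rightarrow> 'n \<Rightarrow> real" where
    h: "\<And>X. pool chi X \<Longrightarrow> (\<exists>j. q (X j) > 0) \<Longrightarrow>
          (\<forall>i. AE \<omega> in M. C X i \<omega> = q (X i) * h (agg X \<omega>) (q (agg X)) i)"
    unfolding strongly_aggregate_ratios_def by blast
  have z: "(\<lambda>\<omega>. 0) \<in> chi" using assms(2) unfolding risk_cone_def by blast
  have q0: "q (\<lambda>\<omega>. 0) = 0" using assms(4) unfolding normalized_def by blast
  have key: "AE \<omega> in M. h (Y \<omega>) (q Y) j = Y \<omega> / q Y"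
    if Y: "Y \<in> chi" "q Y > 0" for Y j
  proof -
    define X' :: "'n \<Rightarrow> 'a \<Rightarrow> real" where "X' = (\<lambda>k. if k = j then Y else (\<lambda>\<omega>. 0))"
    have pX: "pool chi X'" using Y z unfolding pool_def X'_def by auto
    have aggX: "agg X' = Y" unfolding agg_def X'_def
    proof (rule ext)
      fix \<omega>
      have "(\<lambda>i. (if i = j then Y else (\<lambda>\<omega>. 0)) \<omega>) = (\<lambda>i. if i = j then Y \<omega> else 0)"
        by auto
      then show "(\<Sum>i\<in>UNIV. (if i = j then Y else (\<lambda>\<omega>. 0)) \<omega>) = Y \<omega>"
        by (simp only:) simp
    qed
    have qX: "\<exists>j'. q (X' j') > 0" using Y unfolding X'_def by (intro exI[of _ j]) simp
    have A1: "\<forall>k. AE \<omega> in M. C X' k \<omega> = q (X' k) * h (Y \<omega>) (q Y) k"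
      using h[OF pX qX] aggX by simp
    have A2: "AE \<omega> in M. \<forall>k\<in>UNIV. C X' k \<omega> = q (X' k) * h (Y \<omega>) (q Y) k"
      using A1 by (subst AE_finite_all) auto
    have A3: "AE \<omega> in M. (\<Sum>k\<in>UNIV. C X' k \<omega>) = Y \<omega>"
      using assms(6) pX aggX unfolding rs_rule_def by metis
    show ?thesis
      using A2 A3
    proof eventually_elim
      case (elim \<omega>)
      have "(\<Sum>k\<in>UNIV. C X' k \<omega>) = (\<Sum>k\<in>UNIV. if k = j then q Y * h (Y \<omega>) (q Y) j else 0)"
        using elim(1) q0 unfolding X'_def by (intro sum.cong) auto
      also have "\<dots> = q Y * h (Y \<omega>) (q Y) j" by simp
      finally show ?case using elim(2) Y(2) by (simp add: field_simps)
    qed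
  qed
  show "is_q_proportional M chi q C"
    unfolding is_q_proportional_def
  proof (intro allI impI)
    fix X :: "'n \<Rightarrow> 'a \<Rightarrow> real" and i
    assume H: "pool chi X \<and> (\<exists>j. q (X j) > 0)"
    have add: "q (agg X) = (\<Sum>k\<in>UNIV. q (X k))"
      using assms(5) H unfolding additive_def by blast
    have Sin: "agg X \<in> chi" unfolding agg_def
      using sum_in_chi[OF assms(2), of UNIV X] H unfolding pool_def by simp
    obtain j where j: "q (X j) > 0" using H by blast
    have nn: "\<forall>k. q (X k) \<ge> 0" using H assms(3) unfolding pool_def risk_metric_def by blast
    have "(\<Sum>k\<in>UNIV. q (X k)) \<ge> q (X j)"
      using nn by (intro member_le_sum) auto
    then have pos: "q (agg X) > 0" using add j by simp
    have E1: "AE \<omega> in M. C X i \<omega> = q (X i) * h (agg X \<omega>) (q (agg X)) i"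
      using h H by blast
    have E2: "AE \<omega> in M. h (agg X \<omega>) (q (agg X)) i = agg X \<omega> / q (agg X)"
      using key[OF Sin pos] .
    show "AE \<omega> in M. C X i \<omega> = q (X i) / (\<Sum>k\<in>UNIV. q (X k)) * agg X \<omega>"
      using E1 E2 by eventually_elim (simp add: add)
  qed
qed

end
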